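(* Let $\hat\Phi:\mathbf{Sym}\to F[[x]]$ be the (continuous) algebra homomorphism with $\hat\Phi(\mathbf h_n)=E_nx^n/n!$. Then for every composition $L$ of $n$, $\hat\Phi(\mathbf r_L)=\hat\beta(L)\,x^n/n!$, where $\hat\beta(L)$ is the number of permutations of $[n]$ with alternating descent composition $L$.
   Context: $F$ is a field of characteristic $0$. In $F\langle\langle X_1,X_2,\dots\rangle\rangle$ (noncommuting variables), $\mathbf h_n=\sum_{i_1\le\cdots\le i_n}X_{i_1}\cdots X_{i_n}$, $\mathbf h_L=\mathbf h_{L_1}\cdots\mathbf h_{L_k}$; $\mathbf{Sym}$ is the algebra of (possibly infinite) $F$-linear combinations of the $\mathbf h_L$. For a composition $L$ of $n$, $\mathbf r_L=\sum X_{i_1}\cdots X_{i_n}$ over $(i_1,\dots,i_n)$ weakly increasing within consecutive blocks of lengths $L_1,\dots,L_k$ with a strict decrease between the last index of each block and the first of the next. $E_n$: $\sum E_nx^n/n!=\sec x+\tan x$. The alternating descent composition of $\pi\in\mathfrak S_n$ with alternating descent set $\{s_1<\dots<s_k\}$ is $(s_1,s_2-s_1,\dots,n-s_k)$, where $i\in[n-1]$ is an alternating descent if $i$ odd and $\pi_i>\pi_{i+1}$, or $i$ even and $\pi_i<\pi_{i+1}$. *)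

theory Defs
  imports "HOL-Computational_Algebra.Formal_Power_Series" "HOL-Combinatorics.Permutations"
begin

text \<open>Noncommutative formal power series in variables indexed by nat
  (letter i stands for the variable X_(i+1)); a series is its coefficient function on words.\<close>
type_synonym 'a ncps = "nat list \<Rightarrow> 'a"

definition ncone :: "'a::field_char_0 ncps" where
  "ncone w = (if w = [] then 1 else 0)"

definition ncmult :: "'a::field_char_0 ncps \<Rightarrow> 'a ncps \<Rightarrow> 'a ncps" where
  "ncmult f g w = (\<Sum>k\<le>length w. f (take k w) * g (drop k w))"

definition hh :: "nat \<Rightarrow> 'a::field_char_0 ncps" where
  "hh n w = (if length w = n \<and> sorted w then 1 else 0)"

definition hL :: "nat list \<Rightarrow> 'a::field_char_0 ncps" where
  "hL L = foldr (\<lambda>k acc. ncmult (hh k) acc) L ncone"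

definition compositions :: "nat \<Rightarrow> nat list set" where
  "compositions n = {L. sum_list L = n \<and> 0 \<notin> set L}"

text \<open>(possibly infinite) linear combination of the h_L, computed coefficientwise\<close>
definition symsum :: "(nat list \<Rightarrow> 'a::field_char_0) \<Rightarrow> 'a ncps" where
  "symsum c w = (\<Sum>L\<in>compositions (length w). c L * hL L w)"

definition Sym :: "'a::field_char_0 ncps set" where
  "Sym = range symsum"

fun r_ok :: "nat list \<Rightarrow> nat list \<Rightarrow> bool" where
  "r_ok [] w = (w = [])"
| "r_ok (a # L) w = (a \<le> length w \<and> sorted (take a w) \<and> r_ok L (drop a w) \<and>
      (L \<noteq> [] \<longrightarrow> 0 < a \<and> drop a w \<noteq> [] \<and> last (take a w) > hd (drop a w)))"

definition rL :: "nat list \<Rightarrow> 'a::field_char_0 ncps" where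
  "rL L w = (if r_ok L w then 1 else 0)"

definition euler_zz :: "nat \<Rightarrow> 'a::field_char_0" where
  "euler_zz n = fact n * fps_nth (inverse (fps_cos 1) + fps_tan 1) n"

definition alt_descents :: "nat \<Rightarrow> (nat \<Rightarrow> nat) \<Rightarrow> nat set" where
  "alt_descents n \<pi> = {i\<in>{1..<n}. (odd i \<and> \<pi> i > \<pi> (Suc i)) \<or> (even i \<and> \<pi> i < \<pi> (Suc i))}"

definition comp_of_set :: "nat \<Rightarrow> nat set \<Rightarrow> nat list" where
  "comp_of_set n S = (if n = 0 then [] else
     (let s = sorted_list_of_set S in map2 (-) (s @ [n]) (0 # s)))"

definition alt_des_comp :: "nat \<Rightarrow> (nat \<Rightarrow> nat) \<Rightarrow> nat list" where
  "alt_des_comp n \<pi> = comp_of_set n (alt_descents n \<pi>)"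

definition beta_hat :: "nat list \<Rightarrow> nat" where
  "beta_hat L = card {\<pi>. \<pi> permutes {1..sum_list L} \<and> alt_des_comp (sum_list L) \<pi> = L}"

end

theory Submission
  imports Defs "HOL-Combinatorics.Multiset_Permutations"
begin

fun pset :: "nat list \<Rightarrow> nat set" where
  "pset [] = {}"
| "pset (a # K) = (if K = [] then {} else insert a ((+) a ` pset K))"

fun ps :: "nat \<Rightarrow> nat list \<Rightarrow> nat list" where
  "ps b [] = []"
| "ps b [a] = []"
| "ps b (a # c # K) = (b + a) # ps (b + a) (c # K)"

definition cs0 :: "nat \<Rightarrow> nat list \<Rightarrow> nat \<Rightarrow> nat list" where
  "cs0 b s n = map2 (-) (s @ [n]) (b # s)"

lemma cs0_Nil[simp]: "cs0 b [] n = [n - b]"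
  by (simp add: cs0_def)

lemma cs0_Cons[simp]: "cs0 b (x # s) n = (x - b) # cs0 x s n"
  by (simp add: cs0_def)

lemma cs0_ne[simp]: "cs0 b s n \<noteq> []"
  by (simp add: cs0_def)

lemma cs0_ps: "K \<noteq> [] \<Longrightarrow> cs0 b (ps b K) (b + sum_list K) = K"
  by (induction b K rule: ps.induct) (auto simp: add.assoc)

lemma set_ps: "set (ps b K) = (+) b ` pset K"
  by (induction b K rule: ps.induct) (auto simp: image_image add.assoc)

lemma ps_sorted: "0 \<notin> set K \<Longrightarrow> sorted_wrt (<) (ps b K) \<and> (\<forall>x\<in>set (ps b K). b < x \<and> x < b + sum_list K)"
proof (induction b K rule: ps.induct)
  case (3 b a c K)
  then show ?case by fastforce
qed auto

lemma pset_bound: "0 \<notin> set K \<Longrightarrow> pset K \<subseteq> {1..<sum_list K}"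
proof -
  assume "0 \<notin> set K"
  from ps_sorted[OF this, of 0] have "\<forall>x\<in>set (ps 0 K). 0 < x \<and> x < sum_list K" by simp
  then show ?thesis using set_ps[of 0 K] by auto
qed

lemma finite_pset[simp]: "finite (pset K)"
  by (induction K) auto

lemma sorted_pset: "0 \<notin> set K \<Longrightarrow> sorted_list_of_set (pset K) = ps 0 K"
proof -
  assume h: "0 \<notin> set K"
  have "set (ps 0 K) = pset K" using set_ps[of 0 K] by simp
  moreover have "sorted_wrt (<) (ps 0 K)" using ps_sorted[OF h] by blast
  ultimately show ?thesis
    by (metis sorted_list_of_set.idem_if_sorted_distinct strict_sorted_iff)
qed

lemma cos_pset: "L \<in> compositions n \<Longrightarrow> 0 < n \<Longrightarrow> comp_of_set n (pset L) = L"
proof -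
  assume L: "L \<in> compositions n" and n: "0 < n"
  then have h: "0 \<notin> set L" "sum_list L = n" by (auto simp: compositions_def)
  then have "L \<noteq> []" using n by auto
  have "comp_of_set n (pset L) = cs0 0 (ps 0 L) (0 + sum_list L)"
    using n h by (simp add: comp_of_set_def sorted_pset cs0_def Let_def)
  also have "\<dots> = L" by (rule cs0_ps[OF \<open>L \<noteq> []\<close>])
  finally show ?thesis .
qed

lemma cs0_props: "sorted_wrt (<) s \<Longrightarrow> \<forall>x\<in>set s. b < x \<and> x < n \<Longrightarrow> b < n \<Longrightarrow>
   pset (cs0 b s n) = (\<lambda>y. y - b) ` set s \<and> sum_list (cs0 b s n) = n - b \<and> 0 \<notin> set (cs0 b s n)"
proof (induction s arbitrary: b)
  case Nil
  then show ?case by simp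
next
  case (Cons x s)
  have IH: "pset (cs0 x s n) = (\<lambda>y. y - x) ` set s \<and> sum_list (cs0 x s n) = n - x \<and> 0 \<notin> set (cs0 x s n)"
    using Cons by auto
  have "(+) (x - b) ` ((\<lambda>y. y - x) ` set s) = (\<lambda>y. y - b) ` set s"
    unfolding image_image
    using Cons.prems by (intro image_cong) auto
  then show ?case using IH Cons.prems by auto
qed

lemma cos_props: "T \<subseteq> {1..<n} \<Longrightarrow> 0 < n \<Longrightarrow>
   pset (comp_of_set n T) = T \<and> comp_of_set n T \<in> compositions n"
proof -
  assume T: "T \<subseteq> {1..<n}" and n: "0 < n"
  have f: "finite T" using T finite_subset by blast
  let ?s = "sorted_list_of_set T"
  have "sorted_wrt (<) ?s" "set ?s = T" using f by auto
  moreover have "\<forall>x\<in>set ?s. 0 < x \<and> x < n" using T f by auto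
  ultimately have "pset (cs0 0 ?s n) = T \<and> sum_list (cs0 0 ?s n) = n \<and> 0 \<notin> set (cs0 0 ?s n)"
    using cs0_props[of ?s 0 n] n by auto
  then show ?thesis using n by (simp add: comp_of_set_def cs0_def compositions_def Let_def)
qed

definition gd :: "(nat \<Rightarrow> 'b \<Rightarrow> 'b \<Rightarrow> bool) \<Rightarrow> 'b list \<Rightarrow> nat set" where
  "gd R xs = {i. 0 < i \<and> i < length xs \<and> R i (xs!(i-1)) (xs!i)}"

lemma gd_bound: "gd R xs \<subseteq> {1..<length xs}"
  by (auto simp: gd_def)

lemma gd_split_mem: "a \<le> length w \<Longrightarrow> x \<in> gd R w \<longleftrightarrow>
   x \<in> gd R (take a w) \<or> (x = a \<and> 0 < a \<and> a < length w \<and> R a (w!(a-1)) (w!a))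
   \<or> (a < x \<and> x - a \<in> gd (\<lambda>j. R (j + a)) (drop a w))"
  apply (cases "x < a")
   apply (auto simp: gd_def nth_take)[1]
  apply (cases "x = a")
   apply (auto simp: gd_def)[1]
  apply (auto simp: gd_def)
  done

lemma gd_split: "a \<le> length w \<Longrightarrow> gd R w =
   gd R (take a w) \<union> {x. x = a \<and> 0 < a \<and> a < length w \<and> R a (w!(a-1)) (w!a)}
   \<union> (+) a ` gd (\<lambda>j. R (j + a)) (drop a w)"
proof -
  assume a: "a \<le> length w"
  have pos: "\<And>y. y \<in> gd (\<lambda>j. R (j + a)) (drop a w) \<Longrightarrow> 0 < y" by (auto simp: gd_def)
  show ?thesis
  proof (intro set_eqI iffI)
    fix x assume "x \<in> gd R w"
    then show "x \<in> gd R (take a w) \<union> {x. x = a \<and> 0 < a \<and> a < length w \<and> R a (w!(a-1)) (w!a)}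
   \<union> (+) a ` gd (\<lambda>j. R (j + a)) (drop a w)"
      using gd_split_mem[OF a, of x R] by (auto intro!: image_eqI[of x "(+) a" "x - a"])
  next
    fix x assume "x \<in> gd R (take a w) \<union> {x. x = a \<and> 0 < a \<and> a < length w \<and> R a (w!(a-1)) (w!a)}
   \<union> (+) a ` gd (\<lambda>j. R (j + a)) (drop a w)"
    then show "x \<in> gd R w"
      using gd_split_mem[OF a, of x R] pos by auto
  qed
qed

abbreviation Des :: "nat list \<Rightarrow> nat set" where
  "Des w \<equiv> gd (\<lambda>_ x y. y < x) w"

lemma sorted_Des: "sorted w \<longleftrightarrow> Des w = {}"
  unfolding sorted_iff_nth_Suc gd_def
proof (intro iffI allI impI)
  assume h: "\<forall>i. Suc i < length w \<longrightarrow> w ! i \<le> w ! Suc i"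
  show "{i. 0 < i \<and> i < length w \<and> w ! i < w ! (i - 1)} = {}"
  proof (rule ccontr)
    assume "{i. 0 < i \<and> i < length w \<and> w ! i < w ! (i - 1)} \<noteq> {}"
    then obtain i where "0 < i" "i < length w" "w ! i < w ! (i - 1)" by blast
    then show False using h[rule_format, of "i - 1"] by simp
  qed
next
  fix i assume h: "{i. 0 < i \<and> i < length w \<and> w ! i < w ! (i - 1)} = {}" and i: "Suc i < length w"
  then have "Suc i \<notin> {i. 0 < i \<and> i < length w \<and> w ! i < w ! (i - 1)}" by blast
  then show "w ! i \<le> w ! Suc i" using i by simp
qed

lemma Des_take_sub: "Des (take a w) \<subseteq> {1..<a}"
  using gd_bound[of "\<lambda>_ x y. y < x" "take a w"] by fastforce

lemma ncmult_hh: "ncmult (hh a) g w = (if a \<le> length w \<and> sorted (take a w) then g (drop a w) else 0)"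
proof -
  have "ncmult (hh a) g w = (\<Sum>k\<in>{..length w}. if k = a then (if sorted (take a w) then g (drop a w) else 0) else 0)"
    unfolding ncmult_def hh_def by (intro sum.cong) (auto simp: min_def)
  also have "\<dots> = (if a \<le> length w \<and> sorted (take a w) then g (drop a w) else 0)"
    by (simp add: sum.delta)
  finally show ?thesis .
qed

lemma ncmult_one: "ncmult f ncone w = f w"
proof -
  have "ncmult f ncone w = (\<Sum>k\<in>{..length w}. if k = length w then f w else 0)"
    unfolding ncmult_def ncone_def by (intro sum.cong) auto
  then show ?thesis by simp
qed

lemma hL_single: "hL [a] = hh a"
  by (rule ext) (simp add: hL_def ncmult_one)

lemma hL_Cons: "hL (a # K) = ncmult (hh a) (hL K)"
  by (simp add: hL_def)

lemma Des_split_sub: assumes a: "a \<le> length w"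
  shows "Des w \<subseteq> insert a ((+) a ` P) \<longleftrightarrow> Des (take a w) = {} \<and> Des (drop a w) \<subseteq> P"
proof -
  have eq: "Des w = Des (take a w) \<union> {x. x = a \<and> 0 < a \<and> a < length w \<and> w!a < w!(a-1)} \<union> (+) a ` Des (drop a w)"
    using gd_split[OF a, of "\<lambda>_ x y. y < x"] by simp
  have pos: "\<And>y. y \<in> Des (drop a w) \<Longrightarrow> 0 < y" by (auto simp: gd_def)
  show ?thesis
  proof
    assume h: "Des w \<subseteq> insert a ((+) a ` P)"
    have "Des (take a w) = {}" using h eq Des_take_sub[of a w] by fastforce
    moreover have "Des (drop a w) \<subseteq> P"
    proof
      fix y assume y: "y \<in> Des (drop a w)"
      then have "a + y \<in> insert a ((+) a ` P)" using h eq by blast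
      then show "y \<in> P" using pos[OF y] by auto
    qed
    ultimately show "Des (take a w) = {} \<and> Des (drop a w) \<subseteq> P" by blast
  next
    assume "Des (take a w) = {} \<and> Des (drop a w) \<subseteq> P"
    then show "Des w \<subseteq> insert a ((+) a ` P)" using eq by auto
  qed
qed

lemma hL_char: "(hL K w :: 'a::field_char_0) = (if length w = sum_list K \<and> Des w \<subseteq> pset K then 1 else 0)"
proof (induction K arbitrary: w)
  case Nil
  then show ?case by (auto simp: hL_def ncone_def gd_def)
next
  case (Cons a K)
  show ?case
  proof (cases "K = []")
    case True
    then show ?thesis
      by (auto simp: hL_single hh_def sorted_Des)
  next
    case False
    show ?thesis
    proof (cases "a \<le> length w")
      case True
      have "(hL (a # K) w :: 'a) = (if sorted (take a w) then hL K (drop a w) else 0)"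
        using True by (simp add: hL_Cons ncmult_hh)
      also have "\<dots> = (if sorted (take a w) \<and> length (drop a w) = sum_list K \<and> Des (drop a w) \<subseteq> pset K then 1 else 0)"
        unfolding Cons.IH[of "drop a w"] by auto
      also have "(sorted (take a w) \<and> length (drop a w) = sum_list K \<and> Des (drop a w) \<subseteq> pset K)
          \<longleftrightarrow> (length w = sum_list (a # K) \<and> Des w \<subseteq> pset (a # K))"
      proof -
        have e1: "Des w \<subseteq> pset (a#K) \<longleftrightarrow> sorted (take a w) \<and> Des (drop a w) \<subseteq> pset K"
          using Des_split_sub[OF True, of "pset K"] False by (simp add: sorted_Des)
        have e2: "length (drop a w) = sum_list K \<longleftrightarrow> length w = sum_list (a#K)" using True by auto
        show ?thesis using e1 e2 by blast
      qed
      finally show ?thesis .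
    next
      case False
      then show ?thesis by (simp add: hL_Cons ncmult_hh)
    qed
  qed
qed

lemma r_ok_char: "0 \<notin> set L \<Longrightarrow> r_ok L w \<longleftrightarrow> length w = sum_list L \<and> Des w = pset L"
proof (induction L arbitrary: w)
  case Nil
  then show ?case by (auto simp: gd_def)
next
  case (Cons a L)
  show ?case
  proof (cases "L = []")
    case True
    have "r_ok (a # L) w \<longleftrightarrow> a \<le> length w \<and> sorted (take a w) \<and> drop a w = []"
      using True by simp
    also have "\<dots> \<longleftrightarrow> length w = a \<and> sorted w" by auto
    also have "\<dots> \<longleftrightarrow> length w = sum_list (a # L) \<and> Des w = pset (a # L)"
      using True by (simp add: sorted_Des)
    finally show ?thesis .
  next
    case False
    have a0: "0 < a" and L0: "0 \<notin> set L" using Cons.prems by auto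
    have sL: "0 < sum_list L" using False L0 by (cases L) auto
    have pL: "pset L \<subseteq> {1..<sum_list L}" using pset_bound[OF L0] .
    have pa: "pset (a # L) = insert a ((+) a ` pset L)" using False by simp
    show ?thesis
    proof (cases "a \<le> length w")
      case False
      then show ?thesis by auto
    next
      case True
      have eq: "Des w = Des (take a w) \<union> {x. x = a \<and> 0 < a \<and> a < length w \<and> w!a < w!(a-1)} \<union> (+) a ` Des (drop a w)"
        using gd_split[OF True, of "\<lambda>_ x y. y < x"] by simp
      have pos: "\<And>y. y \<in> Des (drop a w) \<Longrightarrow> 0 < y" by (auto simp: gd_def)
      have tk: "Des (take a w) \<subseteq> {1..<a}" by (rule Des_take_sub)
      have lastt: "a < length w \<Longrightarrow> last (take a w) = w!(a-1)" using a0
        by (subst last_conv_nth) auto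
      have hdd: "a < length w \<Longrightarrow> hd (drop a w) = w!a"
        by (simp add: hd_drop_conv_nth)
      have r_eq: "r_ok (a # L) w \<longleftrightarrow> sorted (take a w) \<and> r_ok L (drop a w) \<and>
          drop a w \<noteq> [] \<and> last (take a w) > hd (drop a w)"
        using True False a0 by simp
      show ?thesis
      proof
        assume r: "r_ok (a # L) w"
        then have lw: "length (drop a w) = sum_list L" and D: "Des (drop a w) = pset L"
          and s: "sorted (take a w)" and j: "drop a w \<noteq> []" and jj: "last (take a w) > hd (drop a w)"
          using Cons.IH[OF L0] r_eq by auto
        have j2: "a < length w" using j by simp
        have j3: "w!a < w!(a-1)" using jj lastt[OF j2] hdd[OF j2] by simp
        have s2: "Des (take a w) = {}" using s by (simp add: sorted_Des)
        have "Des w = {a} \<union> (+) a ` pset L" using eq s2 D j2 j3 a0 by auto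
        then show "length w = sum_list (a # L) \<and> Des w = pset (a # L)"
          using lw True pa by auto
      next
        assume h: "length w = sum_list (a # L) \<and> Des w = pset (a # L)"
        then have lw: "length w = a + sum_list L" and D: "Des w = insert a ((+) a ` pset L)"
          using pa by auto
        have j: "a < length w" using lw sL by simp
        have aD: "a \<in> Des w" using D by simp
        then have jj: "w!a < w!(a-1)" by (auto simp: gd_def)
        have s: "Des (take a w) = {}"
        proof -
          have "Des (take a w) \<subseteq> Des w" using eq by blast
          then show ?thesis using tk D pL by fastforce
        qed
        have DD: "Des (drop a w) = pset L"
        proof
          show "Des (drop a w) \<subseteq> pset L"
          proof
            fix y assume y: "y \<in> Des (drop a w)"
            then have "a + y \<in> Des w" using eq by blast
            then show "y \<in> pset L" using D pos[OF y] by auto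
          qed
        next
          show "pset L \<subseteq> Des (drop a w)"
          proof
            fix y assume y: "y \<in> pset L"
            then have ay: "a + y \<in> Des w" using D by auto
            have "0 < y" using y pL by auto
            then have "a + y \<notin> Des (take a w)" "a + y \<noteq> a" using tk by auto
            then have "a + y \<in> (+) a ` Des (drop a w)" using ay eq by blast
            then show "y \<in> Des (drop a w)" by auto
          qed
        qed
        have lw2: "length (drop a w) = sum_list L" using lw by simp
        have rL': "r_ok L (drop a w)" using Cons.IH[OF L0, of "drop a w"] DD lw2 by blast
        show "r_ok (a # L) w"
          unfolding r_eq using rL' s j jj lastt[OF j] hdd[OF j] by (simp add: sorted_Des)
      qed
    qed
  qed
qed

lemma length_le_sum: "0 \<notin> set xs \<Longrightarrow> length xs \<le> sum_list (xs::nat list)"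
  by (induction xs) auto

lemma finite_compositions: "finite (compositions m)"
proof -
  have "compositions m \<subseteq> {xs. set xs \<subseteq> {..m} \<and> length xs \<le> m}"
    unfolding compositions_def using length_le_sum member_le_sum_list by fastforce
  then show ?thesis using finite_lists_length_le[of "{..m}" m] finite_subset by blast
qed

lemma IE: "finite S \<Longrightarrow> (if D = S then 1 else 0) =
   (\<Sum>T\<in>Pow S. (-1) ^ (card S - card T) * (if D \<subseteq> T then 1 else (0::'b::ring_1)))"
  by (rule inclusion_exclusion_mobius[of "\<lambda>T. if D \<subseteq> T then 1 else 0" "\<lambda>T. if D = T then 1 else 0"])
     (auto)

lemma hL_Sym: "0 \<notin> set K \<Longrightarrow> (hL K :: 'a::field_char_0 ncps) \<in> Sym"
proof -
  assume K: "0 \<notin> set K"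
  have "(hL K :: 'a::field_char_0 ncps) = symsum (\<lambda>J. if J = K then 1 else 0)"
  proof
    fix w :: "nat list"
    have "(symsum (\<lambda>J. if J = K then 1 else 0) w :: 'a) = (\<Sum>J\<in>compositions (length w). if K = J then hL J w else 0)"
      unfolding symsum_def by (intro sum.cong) auto
    also have "\<dots> = (if K \<in> compositions (length w) then hL K w else 0)"
      using finite_compositions by simp
    also have "\<dots> = hL K w"
      using K by (auto simp: compositions_def hL_char)
    finally show "(hL K w :: 'a) = symsum (\<lambda>J. if J = K then 1 else 0) w" by simp
  qed
  then show ?thesis unfolding Sym_def by blast
qed

definition PE :: "nat list \<Rightarrow> 'a::field_char_0" where
  "PE K = prod_list (map (\<lambda>k. euler_zz k / fact k) K)"

context
  fixes \<Phi> :: "'a::field_char_0 ncps \<Rightarrow> 'a fps"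
  assumes mult: "\<forall>f\<in>Sym. \<forall>g\<in>Sym. \<Phi> (ncmult f g) = \<Phi> f * \<Phi> g"
    and one: "\<Phi> ncone = 1"
    and hval: "\<forall>m\<ge>1. \<Phi> (hh m) = fps_const (euler_zz m / fact m) * fps_X ^ m"
    and cont: "\<forall>c. \<Phi> (symsum c) = Abs_fps (\<lambda>m. \<Sum>K\<in>compositions m. c K * fps_nth (\<Phi> (hL K)) m)"
begin

lemma Phi_hL: "0 \<notin> set K \<Longrightarrow> \<Phi> (hL K) = fps_const (PE K) * fps_X ^ sum_list K"
proof (induction K)
  case Nil
  then show ?case using one by (simp add: hL_def PE_def)
next
  case (Cons a K)
  have a: "1 \<le> a" and K: "0 \<notin> set K" using Cons.prems by auto
  have s1: "hh a \<in> Sym" using hL_Sym[of "[a]"] a by (simp add: hL_single)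
  have s2: "hL K \<in> Sym" using hL_Sym[OF K] .
  have "\<Phi> (hL (a # K)) = \<Phi> (hh a) * \<Phi> (hL K)"
    using mult[rule_format, OF s1 s2] by (simp add: hL_Cons)
  also have "\<dots> = fps_const (euler_zz a / fact a) * fps_X ^ a * (fps_const (PE K) * fps_X ^ sum_list K)"
    using hval a Cons.IH[OF K] by simp
  also have "\<dots> = fps_const (PE (a # K)) * fps_X ^ sum_list (a # K)"
    by (simp add: PE_def power_add fps_const_mult[symmetric] mult_ac)
  finally show ?case .
qed

lemma Phi_rL:
  assumes L: "L \<in> compositions n" and n: "0 < n"
  shows "\<Phi> (rL L) = fps_const (\<Sum>T\<in>Pow (pset L). (-1) ^ (card (pset L) - card T) * PE (comp_of_set n T)) * fps_X ^ n"
proof -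
  define S where "S = pset L"
  have L0: "0 \<notin> set L" and sL: "sum_list L = n" using L by (auto simp: compositions_def)
  have Sb: "S \<subseteq> {1..<n}" using pset_bound[OF L0] sL S_def by simp
  have fS: "finite S" using S_def by simp
  define sg :: "nat set \<Rightarrow> 'a" where "sg T = (-1) ^ (card S - card T)" for T
  define c where "c K = (\<Sum>T\<in>Pow S. if comp_of_set n T = K then sg T else 0)" for K
  have cp: "T \<in> Pow S \<Longrightarrow> pset (comp_of_set n T) = T \<and> comp_of_set n T \<in> compositions n" for T
    using cos_props[of T n] Sb n by auto
  have hc: "T \<in> Pow S \<Longrightarrow> hL (comp_of_set n T) w = (if length w = n \<and> Des w \<subseteq> T then 1 else (0::'a))" for T w
    using cp[of T] by (simp add: hL_char compositions_def)
  have rs: "rL L = symsum c"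
  proof
    fix w :: "nat list"
    have "(rL L w :: 'a) = (if length w = n then 1 else 0) * (if Des w = S then 1 else 0)"
      unfolding rL_def using r_ok_char[OF L0, of w] sL S_def by simp
    also have "\<dots> = (if length w = n then 1 else 0) * (\<Sum>T\<in>Pow S. sg T * (if Des w \<subseteq> T then 1 else 0))"
    proof -
      have ie: "(if Des w = S then 1 else (0::'a)) = (\<Sum>T\<in>Pow S. sg T * (if Des w \<subseteq> T then 1 else 0))"
        using IE[OF fS, of "Des w"] unfolding sg_def .
      show ?thesis by (simp only: ie)
    qed
    also have "\<dots> = (\<Sum>T\<in>Pow S. sg T * hL (comp_of_set n T) w)"
      by (simp add: sum_distrib_left hc)
    also have "\<dots> = (\<Sum>T\<in>Pow S. \<Sum>K\<in>compositions (length w). if comp_of_set n T = K then sg T * hL K w else 0)"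
    proof (intro sum.cong refl)
      fix T assume T: "T \<in> Pow S"
      show "sg T * hL (comp_of_set n T) w = (\<Sum>K\<in>compositions (length w). if comp_of_set n T = K then sg T * hL K w else 0)"
        using finite_compositions cp[OF T] hc[OF T, of w] by (auto simp: compositions_def split: if_splits)
    qed
    also have "\<dots> = symsum c w"
      unfolding symsum_def c_def sum_distrib_right
      by (subst sum.swap) (intro sum.cong; auto)
    finally show "rL L w = symsum c w" .
  qed
  have coef: "(\<Sum>K\<in>compositions m. c K * fps_nth (\<Phi> (hL K)) m) =
      (if m = n then (\<Sum>T\<in>Pow S. sg T * PE (comp_of_set n T)) else 0)" for m
  proof -
    have "(\<Sum>K\<in>compositions m. c K * fps_nth (\<Phi> (hL K)) m) = (\<Sum>K\<in>compositions m. c K * PE K)"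
      by (intro sum.cong refl) (auto simp: Phi_hL compositions_def)
    also have "\<dots> = (\<Sum>T\<in>Pow S. \<Sum>K\<in>compositions m. if comp_of_set n T = K then sg T * PE K else 0)"
      unfolding c_def sum_distrib_right
      by (subst sum.swap) (intro sum.cong; auto)
    also have "\<dots> = (\<Sum>T\<in>Pow S. if m = n then sg T * PE (comp_of_set n T) else 0)"
    proof (intro sum.cong refl)
      fix T assume T: "T \<in> Pow S"
      show "(\<Sum>K\<in>compositions m. if comp_of_set n T = K then sg T * PE K else 0) = (if m = n then sg T * PE (comp_of_set n T) else 0)"
        using finite_compositions cp[OF T] by (auto simp: compositions_def)
    qed
    also have "\<dots> = (if m = n then (\<Sum>T\<in>Pow S. sg T * PE (comp_of_set n T)) else 0)"
      by simp
    finally show ?thesis .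
  qed
  have "\<Phi> (rL L) = Abs_fps (\<lambda>m. if m = n then (\<Sum>T\<in>Pow S. sg T * PE (comp_of_set n T)) else 0)"
    using cont rs coef by simp
  also have "\<dots> = fps_const (\<Sum>T\<in>Pow S. sg T * PE (comp_of_set n T)) * fps_X ^ n"
    by (intro fps_ext) simp
  finally show ?thesis unfolding sg_def S_def .
qed

end

context
  fixes dummy :: "'a::field_char_0"
begin

abbreviation "ss \<equiv> inverse (fps_cos (1::'a))"
abbreviation "tt \<equiv> fps_tan (1::'a)"
abbreviation "ff \<equiv> ss + tt"

lemma tt_eq: "tt = fps_sin 1 * ss"
  by (simp add: fps_tan_def fps_divide_unit)

lemma ss_c: "ss * fps_cos 1 = 1"
  by (rule inverse_mult_eq_1) simp

lemma deriv_ss: "fps_deriv ss = fps_sin 1 * ss ^ 2"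
  by (simp add: fps_inverse_deriv fps_cos_deriv flip: fps_const_neg)

lemma deriv_tt: "fps_deriv tt = fps_cos 1 * ss + fps_sin 1 * fps_sin 1 * ss ^ 2"
proof -
  have "fps_deriv tt = fps_deriv (fps_sin 1) * ss + fps_sin 1 * fps_deriv ss"
    unfolding tt_eq by simp
  also have "\<dots> = fps_cos 1 * ss + fps_sin 1 * (fps_sin 1 * ss ^ 2)"
    by (simp add: deriv_ss fps_sin_deriv)
  finally show ?thesis by (simp only: mult.assoc)
qed

lemma pyth: "fps_cos (1::'a) * fps_cos 1 + fps_sin 1 * fps_sin 1 = 1"
  using fps_sin_cos_sum_of_squares[of "1::'a"] by (simp add: power2_eq_square)

lemma cs1: "fps_cos 1 * ss = 1"
  using ss_c by (simp add: mult.commute)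

lemma ss2: "ss ^ 2 = fps_cos 1 * ss + fps_sin 1 * fps_sin 1 * ss ^ 2"
proof -
  have "ss ^ 2 = ss ^ 2 * (fps_cos 1 * fps_cos 1 + fps_sin 1 * fps_sin 1)" using pyth by simp
  also have "\<dots> = (fps_cos 1 * ss) * (fps_cos 1 * ss) + fps_sin 1 * fps_sin 1 * ss ^ 2"
    by (simp add: distrib_left power2_eq_square mult_ac)
  also have "\<dots> = fps_cos 1 * ss + fps_sin 1 * fps_sin 1 * ss ^ 2"
    by (simp add: cs1)
  finally show ?thesis .
qed

lemma deriv_ff1: "fps_deriv ff = ss * ff"
proof -
  have "fps_deriv ff = fps_sin 1 * ss ^ 2 + (fps_cos 1 * ss + fps_sin 1 * fps_sin 1 * ss ^ 2)"
    by (simp add: deriv_ss deriv_tt add.assoc)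
  also have "\<dots> = fps_sin 1 * ss ^ 2 + ss ^ 2" using ss2 by simp
  also have "\<dots> = ss * ff"
    unfolding tt_eq by (simp add: distrib_left power2_eq_square mult_ac)
  finally show ?thesis .
qed
lemma deriv_ff2: "fps_deriv ff = tt * ff + 1"
proof -
  have "fps_deriv ff = fps_sin 1 * ss ^ 2 + fps_cos 1 * ss + fps_sin 1 * fps_sin 1 * ss ^ 2"
    by (simp add: deriv_ss deriv_tt)
  also have "\<dots> = tt * ff + 1"
    unfolding tt_eq cs1[symmetric] by (simp add: distrib_left distrib_right power2_eq_square mult_ac)
  finally show ?thesis .
qed

abbreviation "rho g \<equiv> fps_compose g (fps_const (-1::'a) * fps_X)"

lemma rho_cos: "rho (fps_cos 1) = fps_cos 1"
  by (intro fps_ext) (simp add: fps_cos_def)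

lemma rho_sin: "rho (fps_sin 1) = - fps_sin 1"
  by (intro fps_ext) (simp add: fps_sin_def)

lemma rho_ss: "rho ss = ss"
  by (subst fps_inverse_compose) (auto simp: rho_cos)

lemma rho_tt: "rho tt = - tt"
  unfolding tt_eq by (subst fps_compose_mult_distrib) (auto simp: rho_sin rho_ss)

lemma ss_odd: "odd k \<Longrightarrow> fps_nth ss k = 0"
proof -
  assume k: "odd k"
  have "fps_nth (rho ss) k = fps_nth ss k" using rho_ss by simp
  moreover have "fps_nth (rho ss) k = - fps_nth ss k" using k by simp
  ultimately have "- (fps_nth ss k) = fps_nth ss k" by metis
  then have "fps_nth ss k + fps_nth ss k = 0" by (metis add.left_inverse)
  then have "2 * fps_nth ss k = 0" by (metis mult_2)
  then show ?thesis by simp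
qed

lemma tt_even: "even k \<Longrightarrow> fps_nth tt k = 0"
proof -
  assume k: "even k"
  have "fps_nth (rho tt) k = - fps_nth tt k" using rho_tt by simp
  moreover have "fps_nth (rho tt) k = fps_nth tt k" using k by simp
  ultimately have "- (fps_nth tt k) = fps_nth tt k" by metis
  then have "fps_nth tt k + fps_nth tt k = 0" by (metis add.left_inverse)
  then have "2 * fps_nth tt k = 0" by (metis mult_2)
  then show ?thesis by simp
qed

lemma ss_nth: "fps_nth ss k = (if even k then fps_nth ff k else 0)"
  using ss_odd[of k] tt_even[of k] by auto

lemma tt_nth: "fps_nth tt k = (if odd k then fps_nth ff k else 0)"
  using ss_odd[of k] tt_even[of k] by auto

lemma E_rec: "1 \<le> n \<or> odd p \<Longrightarrow> of_nat (n+1) * fps_nth ff (n+1) =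
   (\<Sum>k\<in>{0..n}. if odd (k+p) then fps_nth ff k * fps_nth ff (n-k) else 0)"
proof -
  assume h: "1 \<le> n \<or> odd p"
  have d: "of_nat (n+1) * fps_nth ff (n+1) = fps_nth (fps_deriv ff) n"
    by (rule fps_deriv_nth[symmetric])
  show ?thesis
  proof (cases "odd p")
    case True
    have "fps_nth (fps_deriv ff) n = (\<Sum>k\<in>{0..n}. fps_nth ss k * fps_nth ff (n-k))"
      unfolding deriv_ff1 fps_mult_nth ..
    also have "\<dots> = (\<Sum>k\<in>{0..n}. if odd (k+p) then fps_nth ff k * fps_nth ff (n-k) else 0)"
      using True by (intro sum.cong refl) (simp only: ss_nth; simp del: fps_add_nth)
    finally have "fps_nth (fps_deriv ff) n = (\<Sum>k\<in>{0..n}. if odd (k+p) then fps_nth ff k * fps_nth ff (n-k) else 0)" .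
    with d show ?thesis by (rule trans)
  next
    case False
    then have n: "n \<noteq> 0" using h by auto
    have "fps_nth (fps_deriv ff) n = fps_nth (tt * ff) n"
      unfolding deriv_ff2 using n by simp
    also have "\<dots> = (\<Sum>k\<in>{0..n}. fps_nth tt k * fps_nth ff (n-k))"
      unfolding fps_mult_nth ..
    also have "\<dots> = (\<Sum>k\<in>{0..n}. if odd (k+p) then fps_nth ff k * fps_nth ff (n-k) else 0)"
      using False by (intro sum.cong refl) (simp only: tt_nth; simp del: fps_add_nth)
    finally have "fps_nth (fps_deriv ff) n = (\<Sum>k\<in>{0..n}. if odd (k+p) then fps_nth ff k * fps_nth ff (n-k) else 0)" .
    with d show ?thesis by (rule trans)
  qed
qed

lemma ff0: "fps_nth ff 0 = 1"
  using tt_even[of 0] by simp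

end

abbreviation "pos \<equiv> permutations_of_set"

lemma pos_iff: "xs \<in> pos V \<longleftrightarrow> set xs = V \<and> distinct xs"
  by (simp add: permutations_of_set_def)

lemma sum3_Sigma:
  fixes F :: "'b list \<Rightarrow> 'b list \<Rightarrow> 'c::comm_monoid_add"
  assumes "finite A"
  shows "(\<Sum>Y\<in>A. \<Sum>ys\<in>pos Y. \<Sum>zs\<in>pos (V - Y). F ys zs) =
     (\<Sum>(Y,ys,zs)\<in>(SIGMA Y:A. pos Y \<times> pos (V - Y)). F ys zs)"
proof -
  have "(\<Sum>Y\<in>A. \<Sum>ys\<in>pos Y. \<Sum>zs\<in>pos (V - Y). F ys zs) =
     (\<Sum>Y\<in>A. \<Sum>(ys,zs)\<in>pos Y \<times> pos (V - Y). F ys zs)"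
    by (intro sum.cong refl) (rule sum.cartesian_product)
  also have "\<dots> = (\<Sum>(Y,ys,zs)\<in>(SIGMA Y:A. pos Y \<times> pos (V - Y)). F ys zs)"
    using assms by (subst sum.Sigma) (auto simp: case_prod_beta)
  finally show ?thesis .
qed

lemma split1:
  fixes F :: "'b list \<Rightarrow> 'c::comm_monoid_add"
  assumes V: "finite V" and t: "t \<le> card V"
  shows "(\<Sum>xs\<in>pos V. F xs) =
     (\<Sum>Y\<in>{Y. Y \<subseteq> V \<and> card Y = t}. \<Sum>ys\<in>pos Y. \<Sum>zs\<in>pos (V - Y). F (ys @ zs))"
proof -
  let ?A = "{Y. Y \<subseteq> V \<and> card Y = t}"
  have fA: "finite ?A" using V by auto
  have "(\<Sum>xs\<in>pos V. F xs) = (\<Sum>(Y,ys,zs)\<in>(SIGMA Y:?A. pos Y \<times> pos (V - Y)). F (ys @ zs))"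
  proof (rule sum.reindex_bij_witness[where j = "\<lambda>xs. (set (take t xs), take t xs, drop t xs)"
        and i = "\<lambda>(Y,ys,zs). ys @ zs"])
    fix xs assume xs: "xs \<in> pos V"
    then have d: "distinct xs" and s: "set xs = V" by (auto simp: pos_iff)
    have l: "length xs = card V" using distinct_card[OF d] s by simp
    show "(case (set (take t xs), take t xs, drop t xs) of (Y, ys, zs) \<Rightarrow> ys @ zs) = xs" by simp
    have ct: "card (set (take t xs)) = t" using distinct_card[of "take t xs"] d l t by simp
    have sd: "set (drop t xs) = V - set (take t xs)"
    proof -
      have u: "set (take t xs) \<union> set (drop t xs) = V" using s by (metis append_take_drop_id set_append)
      have i: "set (take t xs) \<inter> set (drop t xs) = {}" using d by (metis append_take_drop_id distinct_append)
      show ?thesis using u i by blast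
    qed
    show "(set (take t xs), take t xs, drop t xs) \<in> (SIGMA Y:?A. pos Y \<times> pos (V - Y))"
      using ct sd d s by (auto simp: pos_iff dest: in_set_takeD)
    show "(case (set (take t xs), take t xs, drop t xs) of (Y, ys, zs) \<Rightarrow> F (ys @ zs)) = F xs" by simp
  next
    fix b assume b: "b \<in> (SIGMA Y:?A. pos Y \<times> pos (V - Y))"
    then obtain Y ys zs where bb: "b = (Y, ys, zs)" and Y: "Y \<subseteq> V" "card Y = t"
      and ys: "set ys = Y" "distinct ys" and zs: "set zs = V - Y" "distinct zs"
      by (auto simp: pos_iff)
    have ly: "length ys = t" using distinct_card[OF ys(2)] ys Y by simp
    show "(case b of (Y, ys, zs) \<Rightarrow> ys @ zs) \<in> pos V"
      using bb Y ys zs by (auto simp: pos_iff)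
    show "(set (take t (case b of (Y, ys, zs) \<Rightarrow> ys @ zs)), take t (case b of (Y, ys, zs) \<Rightarrow> ys @ zs),
          drop t (case b of (Y, ys, zs) \<Rightarrow> ys @ zs)) = b"
      using bb ly ys by simp
  qed
  also have "\<dots> = (\<Sum>Y\<in>?A. \<Sum>ys\<in>pos Y. \<Sum>zs\<in>pos (V - Y). F (ys @ zs))"
    using sum3_Sigma[OF fA, where V=V and F="\<lambda>ys zs. F (ys @ zs)"] by simp
  finally show ?thesis .
qed

lemma split2:
  fixes F :: "'b list \<Rightarrow> 'c::comm_monoid_add"
  assumes W: "finite W" and m: "m \<notin> W"
  shows "(\<Sum>xs\<in>pos (insert m W). F xs) =
     (\<Sum>Y\<in>Pow W. \<Sum>ys\<in>pos Y. \<Sum>zs\<in>pos (W - Y). F (ys @ m # zs))"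
proof -
  let ?P = "\<lambda>x. x \<noteq> m"
  have fA: "finite (Pow W)" using W by auto
  have "(\<Sum>xs\<in>pos (insert m W). F xs) = (\<Sum>(Y,ys,zs)\<in>(SIGMA Y:Pow W. pos Y \<times> pos (W - Y)). F (ys @ m # zs))"
  proof (rule sum.reindex_bij_witness[where j = "\<lambda>xs. (set (takeWhile ?P xs), takeWhile ?P xs, tl (dropWhile ?P xs))"
        and i = "\<lambda>(Y,ys,zs). ys @ m # zs"])
    fix xs assume xs: "xs \<in> pos (insert m W)"
    then have d: "distinct xs" and s: "set xs = insert m W" by (auto simp: pos_iff)
    have ne: "dropWhile ?P xs \<noteq> []" using s by (simp add: dropWhile_eq_Nil_conv)
    have hd: "hd (dropWhile ?P xs) = m" using hd_dropWhile[OF ne] by simp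
    have dec: "xs = takeWhile ?P xs @ m # tl (dropWhile ?P xs)"
      using takeWhile_dropWhile_id[of ?P xs] ne hd by (metis list.collapse)
    show "(case (set (takeWhile ?P xs), takeWhile ?P xs, tl (dropWhile ?P xs)) of (Y, ys, zs) \<Rightarrow> ys @ m # zs) = xs"
      using dec by simp
    show "(case (set (takeWhile ?P xs), takeWhile ?P xs, tl (dropWhile ?P xs)) of (Y, ys, zs) \<Rightarrow> F (ys @ m # zs)) = F xs"
      using dec by simp
    have d2: "distinct (takeWhile ?P xs @ m # tl (dropWhile ?P xs))" using d dec by metis
    have s2: "set (takeWhile ?P xs @ m # tl (dropWhile ?P xs)) = insert m W" using s dec by metis
    have mt: "m \<notin> set (takeWhile ?P xs)" by (auto dest: set_takeWhileD)
    show "(set (takeWhile ?P xs), takeWhile ?P xs, tl (dropWhile ?P xs)) \<in> (SIGMA Y:Pow W. pos Y \<times> pos (W - Y))"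
      using d2 s2 mt m by (auto simp: pos_iff)
  next
    fix b assume b: "b \<in> (SIGMA Y:Pow W. pos Y \<times> pos (W - Y))"
    then obtain Y ys zs where bb: "b = (Y, ys, zs)" and Y: "Y \<subseteq> W"
      and ys: "set ys = Y" "distinct ys" and zs: "set zs = W - Y" "distinct zs"
      by (auto simp: pos_iff)
    have my: "m \<notin> set ys" "m \<notin> set zs" using Y ys zs m by auto
    show "(case b of (Y, ys, zs) \<Rightarrow> ys @ m # zs) \<in> pos (insert m W)"
      using bb Y ys zs my by (auto simp: pos_iff)
    have tw: "takeWhile ?P (ys @ m # zs) = ys"
      using my by (subst takeWhile_append2) auto
    have dw: "dropWhile ?P (ys @ m # zs) = m # zs"
      using my by (subst dropWhile_append2) auto
    show "(set (takeWhile ?P (case b of (Y, ys, zs) \<Rightarrow> ys @ m # zs)), takeWhile ?P (case b of (Y, ys, zs) \<Rightarrow> ys @ m # zs),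
          tl (dropWhile ?P (case b of (Y, ys, zs) \<Rightarrow> ys @ m # zs))) = b"
      using bb tw dw ys by simp
  qed
  also have "\<dots> = (\<Sum>Y\<in>Pow W. \<Sum>ys\<in>pos Y. \<Sum>zs\<in>pos (W - Y). F (ys @ m # zs))"
    using sum3_Sigma[OF fA, where V=W and F="\<lambda>ys zs. F (ys @ m # zs)"] by simp
  finally show ?thesis .
qed

lemma sum_Pow_card:
  fixes g :: "nat \<Rightarrow> 'c::comm_semiring_1"
  assumes W: "finite W"
  shows "(\<Sum>Y\<in>Pow W. g (card Y)) = (\<Sum>k\<in>{0..card W}. of_nat (card W choose k) * g k)"
proof -
  have "(\<Sum>Y\<in>Pow W. g (card Y)) = (\<Sum>k\<in>{0..card W}. \<Sum>Y\<in>{Y\<in>Pow W. card Y = k}. g (card Y))"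
    using W by (intro sum.group[symmetric]) (auto intro: card_mono)
  also have "\<dots> = (\<Sum>k\<in>{0..card W}. of_nat (card W choose k) * g k)"
  proof (intro sum.cong refl)
    fix k
    have "{Y\<in>Pow W. card Y = k} = {Y. Y \<subseteq> W \<and> card Y = k}" by auto
    then have c: "card {Y\<in>Pow W. card Y = k} = card W choose k" using n_subsets[OF W] by simp
    have "(\<Sum>Y\<in>{Y\<in>Pow W. card Y = k}. g (card Y)) = (\<Sum>Y\<in>{Y\<in>Pow W. card Y = k}. g k)"
      by (intro sum.cong) auto
    also have "\<dots> = of_nat (card W choose k) * g k" using c by simp
    finally show "(\<Sum>Y\<in>{Y\<in>Pow W. card Y = k}. g (card Y)) = of_nat (card W choose k) * g k" .
  qed
  finally show ?thesis .
qed

abbreviation aE :: "nat \<Rightarrow> 'a::field_char_0" where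
  "aE k \<equiv> fps_nth (inverse (fps_cos 1) + fps_tan 1) k"

definition ad :: "nat \<Rightarrow> nat list \<Rightarrow> nat set" where
  "ad p xs = gd (\<lambda>i x y. if odd (i + p) then y < x else x < y) xs"

lemma ad_split: "t \<le> length w \<Longrightarrow> ad p w = ad p (take t w) \<union>
   {x. x = t \<and> 0 < t \<and> t < length w \<and> (if odd (t + p) then w!t < w!(t-1) else w!(t-1) < w!t)}
   \<union> (+) t ` ad (p + t) (drop t w)"
proof -
  assume t: "t \<le> length w"
  have e: "(\<lambda>j. (\<lambda>i x y. if odd (i + p) then y < x else (x::nat) < y) (j + t)) =
      (\<lambda>i x y. if odd (i + (p + t)) then y < x else x < y)"
    by (simp add: ac_simps)
  show ?thesis unfolding ad_def using gd_split[OF t, of "\<lambda>i x y. if odd (i + p) then y < x else (x::nat) < y"] e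
    by simp
qed

lemma ad_bound: "ad p xs \<subseteq> {1..<length xs}"
  unfolding ad_def by (rule gd_bound)

lemma ad_single[simp]: "ad p [x] = {}"
  by (auto simp: ad_def gd_def)

lemma ad_Nil[simp]: "ad p [] = {}"
  by (auto simp: ad_def gd_def)

lemma ad_max:
  assumes m: "\<forall>x\<in>set ys \<union> set zs. x < m"
  shows "ad p (ys @ m # zs) = {} \<longleftrightarrow>
    ((ys \<noteq> [] \<or> zs \<noteq> []) \<longrightarrow> odd (length ys + p)) \<and> ad p ys = {} \<and> ad (p + length ys + 1) zs = {}"
proof -
  define t where "t = length ys"
  define w where "w = ys @ m # zs"
  have tl: "t \<le> length w" unfolding t_def w_def by simp
  have tk: "take t w = ys" and dr: "drop t w = m # zs" unfolding t_def w_def by simp_all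
  have wt: "w ! t = m" unfolding t_def w_def by simp
  have wt1: "0 < t \<Longrightarrow> w ! (t - 1) < m"
  proof -
    assume "0 < t"
    then have "w ! (t - 1) = ys ! (t - 1)" unfolding t_def w_def by (simp add: nth_append)
    moreover have "ys ! (t - 1) \<in> set ys" using \<open>0 < t\<close> unfolding t_def by simp
    ultimately show ?thesis using m by auto
  qed
  have lw: "t < length w" unfolding t_def w_def by simp
  have J1: "{x. x = t \<and> 0 < t \<and> t < length w \<and> (if odd (t + p) then w!t < w!(t-1) else w!(t-1) < w!t)} = {}
      \<longleftrightarrow> (t = 0 \<or> odd (t + p))"
    using wt wt1 lw by auto
  have s2: "ad (p + t) (m # zs) = ad (p + t) (take 1 (m # zs)) \<union>
      {x. x = 1 \<and> 0 < (1::nat) \<and> 1 < length (m # zs) \<and> (if odd (1 + (p + t)) then (m#zs)!1 < (m#zs)!(1-1) else (m#zs)!(1-1) < (m#zs)!1)}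
      \<union> (+) 1 ` ad (p + t + 1) (drop 1 (m # zs))"
    using ad_split[of 1 "m # zs" "p + t"] by simp
  have zh: "zs \<noteq> [] \<Longrightarrow> (m#zs)!1 < m" using m by (cases zs) auto
  have J2: "{x. x = 1 \<and> 0 < (1::nat) \<and> 1 < length (m # zs) \<and> (if odd (1 + (p + t)) then (m#zs)!1 < (m#zs)!(1-1) else (m#zs)!(1-1) < (m#zs)!1)} = {}
      \<longleftrightarrow> (zs = [] \<or> odd (t + p))"
    using zh by (cases zs) auto
  have "ad p w = {} \<longleftrightarrow> ad p ys = {} \<and> (t = 0 \<or> odd (t + p)) \<and> ad (p + t) (m # zs) = {}"
    using ad_split[OF tl, of p] tk dr J1 by auto
  also have "ad (p + t) (m # zs) = {} \<longleftrightarrow> (zs = [] \<or> odd (t + p)) \<and> ad (p + t + 1) zs = {}"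
    using s2 J2 by auto
  finally show ?thesis unfolding t_def w_def by auto
qed

lemma sum_sum_mult: "(\<Sum>i\<in>A. \<Sum>j\<in>B. c * (f i * g j)) = c * ((\<Sum>i\<in>A. f i) * (\<Sum>j\<in>B. (g j :: 'a::comm_semiring_1)))"
proof -
  have "c * ((\<Sum>i\<in>A. f i) * (\<Sum>j\<in>B. g j)) = c * (\<Sum>i\<in>A. \<Sum>j\<in>B. f i * g j)"
    by (simp only: sum_product)
  also have "\<dots> = (\<Sum>i\<in>A. \<Sum>j\<in>B. c * (f i * g j))"
    by (simp add: sum_distrib_left)
  finally show ?thesis by simp
qed

lemma aux_mult: "C * fk * fnk = (fn::'a::comm_semiring_1) \<Longrightarrow>
   C * ((if P then 1 else 0) * ((fk * x) * (fnk * y))) = fn * (if P then x * y else 0)"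
proof (cases P)
  case True
  assume h: "C * fk * fnk = fn"
  have "C * ((fk * x) * (fnk * y)) = (C * fk * fnk) * (x * y)" by (simp add: mult_ac)
  then show ?thesis using True h by simp
qed simp

lemma binom_fact': "k \<le> n \<Longrightarrow> (of_nat (n choose k) :: 'a::{semiring_char_0,comm_semiring_1}) * fact k * fact (n - k) = fact n"
proof -
  assume "k \<le> n"
  from binomial_fact_lemma[OF this] have "of_nat (fact k * fact (n - k) * (n choose k)) = (of_nat (fact n) :: 'a)"
    by simp
  then show ?thesis by (simp add: of_nat_mult mult_ac)
qed

lemma Zcount: "finite V \<Longrightarrow> (\<Sum>xs\<in>pos V. if ad p xs = {} then 1 else 0) = fact (card V) * (aE (card V) :: 'a::field_char_0)"
proof (induction "card V" arbitrary: V p rule: less_induct)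
  case less
  show ?case
  proof (cases "V = {}")
    case True
    then show ?thesis by (simp add: tt_even)
  next
    case False
    define m where "m = Max V"
    define W where "W = V - {m}"
    have mV: "m \<in> V" using False less.prems m_def by simp
    have VW: "V = insert m W" and mW: "m \<notin> W" using mV W_def by auto
    have fW: "finite W" using less.prems W_def by simp
    have lt: "\<forall>x\<in>W. x < m" using less.prems W_def m_def
      by (metis Diff_iff Max_ge insertCI le_neq_implies_less)
    define n where "n = card W"
    have cV: "card V = n + 1" using VW mW fW n_def by simp
    show ?thesis
    proof (cases "n = 0")
      case True
      then have "W = {}" using fW n_def by simp
      then have "V = {m}" using VW by simp
      moreover have "of_nat (0+1) * (aE (0+1) :: 'a) = (\<Sum>k\<in>{0..0}. if odd (k+1) then aE k * aE (0-k) else 0)"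
        by (rule E_rec) simp
      ultimately show ?thesis by (simp add: tt_even)
    next
      case False
      have IH: "\<And>U q. finite U \<Longrightarrow> card U \<le> n \<Longrightarrow>
          (\<Sum>xs\<in>pos U. if ad q xs = {} then 1 else 0) = fact (card U) * (aE (card U) :: 'a)"
        using less.hyps cV by simp
      have "(\<Sum>xs\<in>pos V. if ad p xs = {} then 1 else (0::'a)) =
          (\<Sum>Y\<in>Pow W. \<Sum>ys\<in>pos Y. \<Sum>zs\<in>pos (W - Y). if ad p (ys @ m # zs) = {} then 1 else 0)"
        unfolding VW by (rule split2[OF fW mW])
      also have "\<dots> = (\<Sum>Y\<in>Pow W. \<Sum>ys\<in>pos Y. \<Sum>zs\<in>pos (W - Y).
          (if odd (card Y + p) then 1 else 0) * ((if ad p ys = {} then 1 else 0) * (if ad (p + card Y + 1) zs = {} then 1 else 0)))"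
      proof (intro sum.cong refl)
        fix Y ys zs assume Y: "Y \<in> Pow W" and ys: "ys \<in> pos Y" and zs: "zs \<in> pos (W - Y)"
        have sy: "set ys = Y" "distinct ys" and sz: "set zs = W - Y" using ys zs by (auto simp: pos_iff)
        have ly: "length ys = card Y" using distinct_card[OF sy(2)] sy by simp
        have ne: "ys \<noteq> [] \<or> zs \<noteq> []"
        proof (rule ccontr)
          assume "\<not> (ys \<noteq> [] \<or> zs \<noteq> [])"
          then have "W = {}" using sy sz Y by auto
          then show False using False n_def by simp
        qed
        have mm: "\<forall>x\<in>set ys \<union> set zs. x < m" using sy sz Y lt by auto
        show "(if ad p (ys @ m # zs) = {} then 1 else (0::'a)) =
          (if odd (card Y + p) then 1 else 0) * ((if ad p ys = {} then 1 else 0) * (if ad (p + card Y + 1) zs = {} then 1 else 0))"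
          using ad_max[OF mm, of p] ne ly by simp
      qed
      also have "\<dots> = (\<Sum>Y\<in>Pow W. (if odd (card Y + p) then 1 else 0) *
          ((\<Sum>ys\<in>pos Y. if ad p ys = {} then 1 else 0) * (\<Sum>zs\<in>pos (W - Y). if ad (p + card Y + 1) zs = {} then 1 else 0)))"
        by (intro sum.cong refl) (rule sum_sum_mult)
      also have "\<dots> = (\<Sum>Y\<in>Pow W. (if odd (card Y + p) then 1 else 0) *
          ((fact (card Y) * aE (card Y)) * (fact (n - card Y) * aE (n - card Y))))"
      proof (intro sum.cong refl)
        fix Y assume Y: "Y \<in> Pow W"
        have fY: "finite Y" using Y fW finite_subset by auto
        have cY: "card Y \<le> n" using Y fW n_def card_mono by auto
        have cWY: "card (W - Y) = n - card Y" using Y fW n_def fY by (simp add: card_Diff_subset)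
        show "(if odd (card Y + p) then 1 else 0) *
          ((\<Sum>ys\<in>pos Y. if ad p ys = {} then 1 else 0) * (\<Sum>zs\<in>pos (W - Y). if ad (p + card Y + 1) zs = {} then 1 else 0)) =
          (if odd (card Y + p) then 1 else 0) * ((fact (card Y) * aE (card Y)) * (fact (n - card Y) * (aE (n - card Y) :: 'a)))"
          using IH[OF fY cY, of p] IH[of "W - Y" "p + card Y + 1"] cWY fW by simp
      qed
      also have "\<dots> = (\<Sum>k\<in>{0..n}. of_nat (n choose k) * ((if odd (k + p) then 1 else 0) *
          ((fact k * aE k) * (fact (n - k) * aE (n - k)))))"
        using sum_Pow_card[OF fW, of "\<lambda>k. (if odd (k + p) then 1 else 0) * ((fact k * aE k) * (fact (n - k) * (aE (n - k) :: 'a)))"]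
        n_def by simp
      also have "\<dots> = fact n * (\<Sum>k\<in>{0..n}. if odd (k + p) then aE k * aE (n - k) else 0)"
        unfolding sum_distrib_left
      proof (intro sum.cong refl)
        fix k assume "k \<in> {0..n}"
        then have "(of_nat (n choose k) :: 'a) * fact k * fact (n - k) = fact n" by (simp add: binom_fact')
        then show "of_nat (n choose k) * ((if odd (k + p) then 1 else 0) * ((fact k * aE k) * (fact (n - k) * aE (n - k)))) =
            fact n * (if odd (k + p) then aE k * aE (n - k) else (0::'a))"
          by (rule aux_mult)
      qed
      also have "\<dots> = fact n * (of_nat (n + 1) * aE (n + 1))"
      proof -
        have e: "of_nat (n+1) * aE (n+1) = (\<Sum>k\<in>{0..n}. if odd (k+p) then aE k * aE (n-k) else (0::'a))"
          by (rule E_rec) (use False in simp)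
        show ?thesis by (simp only: e)
      qed
      also have "\<dots> = fact (card V) * aE (card V)"
        using cV by (simp add: algebra_simps)
      finally show ?thesis .
    qed
  qed
qed

lemma cos_Max:
  assumes T: "T \<subseteq> {1..<n}" "T \<noteq> {}" and t: "t = Max T"
  shows "comp_of_set n T = comp_of_set t (T - {t}) @ [n - t]"
proof -
  have fT: "finite T" using T(1) finite_subset by blast
  have tT: "t \<in> T" using t fT T(2) by simp
  have t0: "0 < t" and tn: "t < n" using tT T(1) by auto
  define s where "s = sorted_list_of_set (T - {t})"
  have ss: "sorted s" "distinct s" "set s = T - {t}" using fT s_def by auto
  have lt: "\<forall>x\<in>set s. x < t" using ss(3) fT t by (metis Diff_iff Max_ge insertCI le_neq_implies_less)
  have "sorted_list_of_set T = s @ [t]"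
  proof -
    have "set (s @ [t]) = T" using ss tT by auto
    moreover have "sorted (s @ [t])" using ss lt by (auto simp: sorted_append less_imp_le)
    moreover have "distinct (s @ [t])" using ss by auto
    ultimately show ?thesis by (metis sorted_list_of_set.idem_if_sorted_distinct)
  qed
  then have "comp_of_set n T = map2 (-) ((s @ [t]) @ [n]) ((0 # s) @ [t])"
    using tn by (simp add: comp_of_set_def)
  also have "\<dots> = map2 (-) (s @ [t]) (0 # s) @ [n - t]"
  proof -
    have "zip ((s @ [t]) @ [n]) ((0 # s) @ [t]) = zip (s @ [t]) (0 # s) @ zip [n] [t]"
      by (rule zip_append) simp
    then show ?thesis by simp
  qed
  also have "map2 (-) (s @ [t]) (0 # s) = comp_of_set t (T - {t})"
    using t0 by (simp add: comp_of_set_def s_def Let_def)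
  finally show ?thesis .
qed

lemma cos_empty: "0 < n \<Longrightarrow> comp_of_set n {} = [n]"
  by (simp add: comp_of_set_def)

lemma Acount: "finite V \<Longrightarrow> card V = n \<Longrightarrow> T \<subseteq> {1..<n} \<Longrightarrow>
  (\<Sum>xs\<in>pos V. if ad p xs \<subseteq> T then 1 else 0) = fact n * (prod_list (map aE (comp_of_set n T)) :: 'a::field_char_0)"
proof (induction "card T" arbitrary: T n V p rule: less_induct)
  case less
  note V = less.prems(1) and cV = less.prems(2) and Tn = less.prems(3)
  show ?case
  proof (cases "T = {}")
    case True
    show ?thesis
    proof (cases "n = 0")
      case True
      then have "V = {}" using V cV by simp
      then show ?thesis using True \<open>T = {}\<close> by (simp add: comp_of_set_def)
    next
      case False
      have "(\<Sum>xs\<in>pos V. if ad p xs \<subseteq> T then 1 else 0) = (\<Sum>xs\<in>pos V. if ad p xs = {} then 1 else (0::'a))"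
        using \<open>T = {}\<close> by simp
      also have "\<dots> = fact n * aE n" using Zcount[OF V, of p] cV by simp
      finally show ?thesis using \<open>T = {}\<close> False by (simp add: cos_empty)
    qed
  next
    case False
    have fT: "finite T" using Tn finite_subset by blast
    define t where "t = Max T"
    define T' where "T' = T - {t}"
    have tT: "t \<in> T" using t_def fT False by simp
    have t1: "1 \<le> t" and tn: "t < n" using tT Tn by auto
    have Tt: "\<forall>x\<in>T. x \<le> t" using fT t_def by simp
    have T't: "T' \<subseteq> {1..<t}" using Tn Tt T'_def by fastforce
    have cT': "card T' < card T" unfolding T'_def by (rule card_Diff1_less[OF fT tT])
    have IH: "\<And>U q. finite U \<Longrightarrow> card U = t \<Longrightarrow>
        (\<Sum>xs\<in>pos U. if ad q xs \<subseteq> T' then 1 else 0) = fact t * (prod_list (map aE (comp_of_set t T')) :: 'a)"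
      using less.hyps[OF cT'] T't by blast
    let ?A = "{Y. Y \<subseteq> V \<and> card Y = t}"
    have "(\<Sum>xs\<in>pos V. if ad p xs \<subseteq> T then 1 else (0::'a)) =
        (\<Sum>Y\<in>?A. \<Sum>ys\<in>pos Y. \<Sum>zs\<in>pos (V - Y). if ad p (ys @ zs) \<subseteq> T then 1 else 0)"
      using split1[OF V, of t] tn cV by simp
    also have "\<dots> = (\<Sum>Y\<in>?A. \<Sum>ys\<in>pos Y. \<Sum>zs\<in>pos (V - Y). 1 * ((if ad p ys \<subseteq> T' then 1 else 0) * (if ad (p + t) zs = {} then 1 else 0)))"
    proof (intro sum.cong refl)
      fix Y ys zs assume Y: "Y \<in> ?A" and ys: "ys \<in> pos Y" and zs: "zs \<in> pos (V - Y)"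
      have ly: "length ys = t" using ys Y distinct_card[of ys] by (auto simp: pos_iff)
      have tl: "t \<le> length (ys @ zs)" using ly by simp
      have eq: "ad p (ys @ zs) = ad p ys \<union>
        {x. x = t \<and> 0 < t \<and> t < length (ys @ zs) \<and> (if odd (t + p) then (ys @ zs)!t < (ys @ zs)!(t-1) else (ys @ zs)!(t-1) < (ys @ zs)!t)}
        \<union> (+) t ` ad (p + t) zs"
        using ad_split[OF tl, of p] ly by simp
      have b1: "ad p ys \<subseteq> {1..<t}" using ad_bound[of p ys] ly by simp
      have b2: "\<And>y. y \<in> ad (p + t) zs \<Longrightarrow> 0 < y" using ad_bound[of "p + t" zs] by auto
      have "ad p (ys @ zs) \<subseteq> T \<longleftrightarrow> ad p ys \<subseteq> T' \<and> ad (p + t) zs = {}"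
      proof
        assume h: "ad p (ys @ zs) \<subseteq> T"
        have "ad p ys \<subseteq> T'" using h eq b1 T'_def by auto
        moreover have "ad (p + t) zs = {}"
        proof (rule ccontr)
          assume "ad (p + t) zs \<noteq> {}"
          then obtain y where y: "y \<in> ad (p + t) zs" by blast
          then have "t + y \<in> T" using h eq by blast
          then show False using Tt b2[OF y] by fastforce
        qed
        ultimately show "ad p ys \<subseteq> T' \<and> ad (p + t) zs = {}" by blast
      next
        assume "ad p ys \<subseteq> T' \<and> ad (p + t) zs = {}"
        then show "ad p (ys @ zs) \<subseteq> T" using eq tT T'_def by auto
      qed
      then show "(if ad p (ys @ zs) \<subseteq> T then 1 else (0::'a)) =
          1 * ((if ad p ys \<subseteq> T' then 1 else 0) * (if ad (p + t) zs = {} then 1 else 0))"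
        by simp
    qed
    also have "\<dots> = (\<Sum>Y\<in>?A. 1 * ((\<Sum>ys\<in>pos Y. if ad p ys \<subseteq> T' then 1 else 0) * (\<Sum>zs\<in>pos (V - Y). if ad (p + t) zs = {} then 1 else 0)))"
      by (intro sum.cong refl) (rule sum_sum_mult)
    also have "\<dots> = (\<Sum>Y\<in>?A. (fact t * prod_list (map aE (comp_of_set t T'))) * (fact (n - t) * aE (n - t)))"
    proof (intro sum.cong refl)
      fix Y assume Y: "Y \<in> ?A"
      have fY: "finite Y" using Y V finite_subset by blast
      have cVY: "card (V - Y) = n - t" using Y V cV fY by (simp add: card_Diff_subset)
      show "1 * ((\<Sum>ys\<in>pos Y. if ad p ys \<subseteq> T' then 1 else 0) * (\<Sum>zs\<in>pos (V - Y). if ad (p + t) zs = {} then 1 else 0)) =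
          (fact t * prod_list (map aE (comp_of_set t T'))) * (fact (n - t) * (aE (n - t) :: 'a))"
        using IH[OF fY, of p] Y Zcount[where 'a='a, of "V - Y" "p + t"] cVY V by simp
    qed
    also have "\<dots> = of_nat (n choose t) * ((fact t * prod_list (map aE (comp_of_set t T'))) * (fact (n - t) * aE (n - t)))"
      using n_subsets[OF V, of t] cV by simp
    also have "\<dots> = fact n * (prod_list (map aE (comp_of_set t T')) * aE (n - t))"
    proof -
      have "(of_nat (n choose t) :: 'a) * fact t * fact (n - t) = fact n" using tn by (simp add: binom_fact')
      then show ?thesis using aux_mult[of "of_nat (n choose t) :: 'a" "fact t" "fact (n - t)" "fact n" True] by simp
    qed
    also have "\<dots> = fact n * prod_list (map aE (comp_of_set n T))"
      using cos_Max[OF Tn False t_def] T'_def by simp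
    finally show ?thesis .
  qed
qed

lemma perm_list_card:
  "card {\<pi>. \<pi> permutes {1..n} \<and> Q (map \<pi> [1..<n+1])} = card {xs \<in> pos {1..n}. Q xs}"
proof -
  define f where "f \<pi> = map \<pi> [1..<n+1]" for \<pi> :: "nat \<Rightarrow> nat"
  define P where "P = {\<pi>. \<pi> permutes {1..(n::nat)}}"
  have inj: "inj_on f P"
  proof
    fix \<pi> \<sigma> assume a: "\<pi> \<in> P" "\<sigma> \<in> P" and e: "f \<pi> = f \<sigma>"
    show "\<pi> = \<sigma>"
    proof
      fix x
      show "\<pi> x = \<sigma> x"
      proof (cases "x \<in> {1..n}")
        case True
        then have "x \<in> set [1..<n+1]" by auto
        then show ?thesis using e unfolding f_def by (metis map_eq_conv)
      next
        case False
        then show ?thesis using a permutes_not_in[of \<pi> "{1..n}" x] permutes_not_in[of \<sigma> "{1..n}" x]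
          unfolding P_def by auto
      qed
    qed
  qed
  have sub: "f ` P \<subseteq> pos {1..n}"
  proof
    fix xs assume "xs \<in> f ` P"
    then obtain \<pi> where p: "\<pi> permutes {1..n}" and xs: "xs = f \<pi>" unfolding P_def by auto
    have "set xs = \<pi> ` {1..n}" unfolding xs f_def by auto
    also have "\<dots> = {1..n}" using permutes_image[OF p] .
    finally have "set xs = {1..n}" .
    moreover have "distinct xs" unfolding xs f_def
      using permutes_inj_on[OF p] by (simp add: distinct_map inj_on_subset)
    ultimately show "xs \<in> pos {1..n}" by (simp add: pos_iff)
  qed
  have cP: "card P = fact n" unfolding P_def using card_permutations[of "{1..n}" n] by simp
  have eqP: "f ` P = pos {1..n}"
  proof (rule card_subset_eq)
    show "finite (pos {1..n})" by simp
    show "f ` P \<subseteq> pos {1..n}" by (rule sub)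
    show "card (f ` P) = card (pos {1..n})" using card_image[OF inj] cP by simp
  qed
  have "{xs \<in> pos {1..n}. Q xs} = f ` {\<pi> \<in> P. Q (f \<pi>)}" using eqP by auto
  moreover have "card (f ` {\<pi> \<in> P. Q (f \<pi>)}) = card {\<pi> \<in> P. Q (f \<pi>)}"
    by (rule card_image) (rule inj_on_subset[OF inj], auto)
  ultimately show ?thesis unfolding P_def f_def by simp
qed

lemma AD_eq: "alt_descents n \<pi> = ad 0 (map \<pi> [1..<n+1])"
proof -
  have "\<And>i. 0 < i \<Longrightarrow> i < n \<Longrightarrow> map \<pi> [1..<n+1] ! (i - 1) = \<pi> i \<and> map \<pi> [1..<n+1] ! i = \<pi> (Suc i)"
    by (simp del: upt_Suc)
  then show ?thesis unfolding alt_descents_def ad_def gd_def by (auto simp del: upt_Suc)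
qed

lemma card_indicator: "finite A \<Longrightarrow> (of_nat (card {x\<in>A. P x}) :: 'a::comm_semiring_1) = (\<Sum>x\<in>A. if P x then 1 else 0)"
  by (simp add: sum.inter_filter[symmetric])

lemma PE_aE: "PE K = (prod_list (map aE K) :: 'a::field_char_0)"
  unfolding PE_def euler_zz_def by (intro arg_cong[where f = prod_list] map_cong) auto

lemma beta_sum:
  assumes L: "L \<in> compositions n" and n: "0 < n"
  shows "(of_nat (beta_hat L) :: 'a::field_char_0) =
     fact n * (\<Sum>T\<in>Pow (pset L). (-1) ^ (card (pset L) - card T) * PE (comp_of_set n T))"
proof -
  define S where "S = pset L"
  have L0: "0 \<notin> set L" and sL: "sum_list L = n" using L by (auto simp: compositions_def)
  have Sb: "S \<subseteq> {1..<n}" using pset_bound[OF L0] sL S_def by simp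
  have fS: "finite S" using S_def by simp
  have "beta_hat L = card {\<pi>. \<pi> permutes {1..n} \<and> ad 0 (map \<pi> [1..<n+1]) = S}"
  proof -
    have "\<And>\<pi>. alt_des_comp n \<pi> = L \<longleftrightarrow> ad 0 (map \<pi> [1..<n+1]) = S"
    proof -
      fix \<pi> :: "nat \<Rightarrow> nat"
      have sub: "alt_descents n \<pi> \<subseteq> {1..<n}" unfolding alt_descents_def by auto
      show "alt_des_comp n \<pi> = L \<longleftrightarrow> ad 0 (map \<pi> [1..<n+1]) = S"
        unfolding alt_des_comp_def AD_eq[symmetric] S_def
        using cos_props[OF sub n] cos_pset[OF L n] by metis
    qed
    then show ?thesis unfolding beta_hat_def sL by simp
  qed
  also have "\<dots> = card {xs \<in> pos {1..n}. ad 0 xs = S}" by (rule perm_list_card)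
  finally have "(of_nat (beta_hat L) :: 'a) = (\<Sum>xs\<in>pos {1..n}. if ad 0 xs = S then 1 else 0)"
    by (simp add: card_indicator)
  also have "\<dots> = (\<Sum>xs\<in>pos {1..n}. \<Sum>T\<in>Pow S. (-1) ^ (card S - card T) * (if ad 0 xs \<subseteq> T then 1 else 0))"
    by (intro sum.cong refl) (rule IE[OF fS])
  also have "\<dots> = (\<Sum>T\<in>Pow S. (-1) ^ (card S - card T) * (\<Sum>xs\<in>pos {1..n}. if ad 0 xs \<subseteq> T then 1 else 0))"
    by (subst sum.swap) (simp add: sum_distrib_left)
  also have "\<dots> = (\<Sum>T\<in>Pow S. (-1) ^ (card S - card T) * (fact n * prod_list (map aE (comp_of_set n T))))"
  proof (intro sum.cong refl)
    fix T assume T: "T \<in> Pow S"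
    then have "T \<subseteq> {1..<n}" using Sb by auto
    then show "(-1) ^ (card S - card T) * (\<Sum>xs\<in>pos {1..n}. if ad 0 xs \<subseteq> T then 1 else 0) =
        (-1) ^ (card S - card T) * (fact n * (prod_list (map aE (comp_of_set n T)) :: 'a))"
      using Acount[where 'a='a, of "{1..n}" n T 0] by simp
  qed
  also have "\<dots> = fact n * (\<Sum>T\<in>Pow S. (-1) ^ (card S - card T) * PE (comp_of_set n T))"
    by (simp add: sum_distrib_left PE_aE mult_ac)
  finally show ?thesis unfolding S_def .
qed

theorem lemma10:
  fixes \<Phi> :: "'a::field_char_0 ncps \<Rightarrow> 'a fps" and L :: "nat list" and n :: nat
  assumes mult: "\<forall>f\<in>Sym. \<forall>g\<in>Sym. \<Phi> (ncmult f g) = \<Phi> f * \<Phi> g"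
    and one: "\<Phi> ncone = 1"
    and hval: "\<forall>m\<ge>1. \<Phi> (hh m) = fps_const (euler_zz m / fact m) * fps_X ^ m"
    and cont: "\<forall>c. \<Phi> (symsum c) = Abs_fps (\<lambda>m. \<Sum>K\<in>compositions m. c K * fps_nth (\<Phi> (hL K)) m)"
    and L: "L \<in> compositions n"
  shows "\<Phi> (rL L) = fps_const (of_nat (beta_hat L) / fact n) * fps_X ^ n"
proof (cases "n = 0")
  case True
  then have L0: "L = []" using L by (cases L) (auto simp: compositions_def)
  have r: "(rL L :: 'a ncps) = ncone" unfolding L0 by (rule ext) (simp add: rL_def ncone_def)
  have "{\<pi>. \<pi> permutes {1..sum_list L} \<and> alt_des_comp (sum_list L) \<pi> = L} = {id}"
    using L0 by (auto simp: alt_des_comp_def comp_of_set_def)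
  then have "beta_hat L = 1" unfolding beta_hat_def by simp
  then show ?thesis using r one True by simp
next
  case False
  then have n: "0 < n" by simp
  have "\<Phi> (rL L) = fps_const (\<Sum>T\<in>Pow (pset L). (-1) ^ (card (pset L) - card T) * PE (comp_of_set n T)) * fps_X ^ n"
    by (rule Phi_rL[OF mult one hval cont L n])
  also have "(\<Sum>T\<in>Pow (pset L). (-1) ^ (card (pset L) - card T) * PE (comp_of_set n T)) = (of_nat (beta_hat L) / fact n :: 'a)"
    using beta_sum[OF L n, where 'a='a] by simp
  finally show ?thesis .
qed

end
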